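(* Let $\Gamma\subset SL_2(\mathbb R)$ be a Fuchsian group, $\mathcal A$ a finite-dimensional complex unital algebra, and $G:\mathbb H\to\mathcal A$ meromorphic with $G(\gamma z)=(cz+d)^2G(z)+2c(cz+d)1_{\mathcal A}$ for all $\gamma\in\Gamma$. For $f\in\mathcal M_k(\Gamma,\mathcal A)$ set $\mathbb D^G_k(f)=\mathsf Df-\frac{k}{4\pi i}Gf$, $\mathbb D^{G,[0]}_k(f)=f$, $\mathbb D^{G,[r+1]}_k(f)=\mathbb D^G_{k+2r}(\mathbb D^{G,[r]}_k(f))$. For $f\in\mathcal M_k(\Gamma,\mathcal A)$, $g\in\mathcal M_\ell(\Gamma,\mathcal A)$ and $r\ge0$ define $$[f,g]^L_{G;r}=\sum_{s=0}^r(-1)^s\binom{k+r-1}{r-s}\binom{\ell+r-1}{s}\bigl(\mathbb D^{G,[s]}_kf\bigr)\bigl(\mathbb D^{G,[r-s]}_\ell g\bigr),$$ $$[f,g]^R_{G;r}=\sum_{s=0}^r(-1)^s\binom{k+r-1}{r-s}\binom{\ell+r-1}{s}\bigl(\mathbb D^{G,[r-s]}_\ell g\bigr)\bigl(\mathbb D^{G,[s]}_kf\bigr),$$ and $[f,g]^{\mathrm{sym}}_{G;r}=\frac12([f,g]^L_{G;r}+[f,g]^R_{G;r})$, $[f,g]^{\mathrm{skew}}_{G;r}=\frac12([f,g]^L_{G;r}-[f,g]^R_{G;r})$. Then all four of these lie in $\mathcal M_{k+\ell+2r}(\Gamma,\mathcal A)$.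
   Context: $\mathbb H$ is the upper half-plane with $\gamma z=(az+b)/(cz+d)$, $j(\gamma,z)=cz+d$. $\mathsf D=\frac1{2\pi i}\frac{d}{dz}$. $\mathcal M_k(\Gamma,\mathcal A)$ is the space of meromorphic $F:\mathbb H\to\mathcal A$ with $j(\gamma,z)^{-k}F(\gamma z)=F(z)$ for all $\gamma\in\Gamma$. *)

theory Defs
  imports "HOL-Complex_Analysis.Complex_Analysis"
begin

definition uhp :: "complex set" where
  "uhp = {z. Im z > 0}"

definition SL2R :: "(real^2^2) set" where
  "SL2R = {g. det g = 1}"

definition fuchsian :: "(real^2^2) set \<Rightarrow> bool" where
  "fuchsian \<Gamma> \<longleftrightarrow>
     \<Gamma> \<subseteq> SL2R \<and> mat 1 \<in> \<Gamma> \<and>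
     (\<forall>g\<in>\<Gamma>. \<forall>h\<in>\<Gamma>. g ** h \<in> \<Gamma>) \<and>
     (\<forall>g\<in>\<Gamma>. matrix_inv g \<in> \<Gamma>) \<and>
     (\<forall>g\<in>\<Gamma>. \<exists>e>0. \<forall>h\<in>\<Gamma>. dist h g < e \<longrightarrow> h = g)"

definition moebius :: "real^2^2 \<Rightarrow> complex \<Rightarrow> complex" where
  "moebius g z = (of_real (g$1$1) * z + of_real (g$1$2)) / (of_real (g$2$1) * z + of_real (g$2$2))"

definition jfac :: "real^2^2 \<Rightarrow> complex \<Rightarrow> complex" where
  "jfac g z = of_real (g$2$1) * z + of_real (g$2$2)"

text \<open>A finite-dimensional complex unital (associative) algebra, presented on the
  coordinate space complex^'n (w.r.t. a chosen basis) by a complex-bilinear,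
  associative multiplication with unit element.\<close>
definition fd_unital_algebra ::
  "(complex^'n \<Rightarrow> complex^'n \<Rightarrow> complex^'n) \<Rightarrow> complex^'n \<Rightarrow> bool" where
  "fd_unital_algebra mul one \<longleftrightarrow>
     (\<forall>x y z. mul (x + y) z = mul x z + mul y z) \<and>
     (\<forall>x y z. mul x (y + z) = mul x y + mul x z) \<and>
     (\<forall>c x y. mul (c *s x) y = c *s mul x y) \<and>
     (\<forall>c x y. mul x (c *s y) = c *s mul x y) \<and>
     (\<forall>x y z. mul (mul x y) z = mul x (mul y z)) \<and>
     (\<forall>x. mul one x = x \<and> mul x one = x)"

definition vmeromorphic_on :: "(complex \<Rightarrow> complex^'n) \<Rightarrow> complex set \<Rightarrow> bool" where
  "vmeromorphic_on F S \<longleftrightarrow> (\<forall>i. (\<lambda>z. F z $ i) meromorphic_on S)"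

text \<open>M_k(Gamma, A): meromorphic F with j(g,z)^(-k) F(g z) = F(z); as usual for meromorphic
  functions, the identity is required away from a discrete (sparse) set.\<close>
definition MF :: "(real^2^2) set \<Rightarrow> int \<Rightarrow> (complex \<Rightarrow> complex^'n) set" where
  "MF \<Gamma> k = {F. vmeromorphic_on F uhp \<and>
     (\<forall>g\<in>\<Gamma>. \<forall>\<^sub>\<approx>z\<in>uhp. (jfac g z) powi (-k) *s F (moebius g z) = F z)}"

definition Dop :: "(complex \<Rightarrow> complex^'n) \<Rightarrow> complex \<Rightarrow> complex^'n" where
  "Dop F z = (\<chi> i. deriv (\<lambda>w. F w $ i) z / (2 * of_real pi * \<i>))"

definition DG ::
  "(complex^'n \<Rightarrow> complex^'n \<Rightarrow> complex^'n) \<Rightarrow> (complex \<Rightarrow> complex^'n) \<Rightarrow> int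
     \<Rightarrow> (complex \<Rightarrow> complex^'n) \<Rightarrow> complex \<Rightarrow> complex^'n" where
  "DG mul G k F z = Dop F z - (of_int k / (4 * of_real pi * \<i>)) *s mul (G z) (F z)"

primrec DGit ::
  "(complex^'n \<Rightarrow> complex^'n \<Rightarrow> complex^'n) \<Rightarrow> (complex \<Rightarrow> complex^'n) \<Rightarrow> int \<Rightarrow> nat
     \<Rightarrow> (complex \<Rightarrow> complex^'n) \<Rightarrow> complex \<Rightarrow> complex^'n" where
  "DGit mul G k 0 F = F"
| "DGit mul G k (Suc r) F = DG mul G (k + 2 * int r) (DGit mul G k r F)"

definition bracketL ::
  "(complex^'n \<Rightarrow> complex^'n \<Rightarrow> complex^'n) \<Rightarrow> (complex \<Rightarrow> complex^'n) \<Rightarrow> int \<Rightarrow> int \<Rightarrow> nat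
     \<Rightarrow> (complex \<Rightarrow> complex^'n) \<Rightarrow> (complex \<Rightarrow> complex^'n) \<Rightarrow> complex \<Rightarrow> complex^'n" where
  "bracketL mul G k l r f g z =
     (\<Sum>s\<le>r. ((-1) ^ s * (of_int (k + int r - 1) gchoose (r - s))
                         * (of_int (l + int r - 1) gchoose s))
             *s mul (DGit mul G k s f z) (DGit mul G l (r - s) g z))"

definition bracketR ::
  "(complex^'n \<Rightarrow> complex^'n \<Rightarrow> complex^'n) \<Rightarrow> (complex \<Rightarrow> complex^'n) \<Rightarrow> int \<Rightarrow> int \<Rightarrow> nat
     \<Rightarrow> (complex \<Rightarrow> complex^'n) \<Rightarrow> (complex \<Rightarrow> complex^'n) \<Rightarrow> complex \<Rightarrow> complex^'n" where
  "bracketR mul G k l r f g z =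
     (\<Sum>s\<le>r. ((-1) ^ s * (of_int (k + int r - 1) gchoose (r - s))
                         * (of_int (l + int r - 1) gchoose s))
             *s mul (DGit mul G l (r - s) g z) (DGit mul G k s f z))"

definition bracketSym where
  "bracketSym mul G k l r f g z =
     (1/2 :: complex) *s (bracketL mul G k l r f g z + bracketR mul G k l r f g z)"

definition bracketSkew where
  "bracketSkew mul G k l r f g z =
     (1/2 :: complex) *s (bracketL mul G k l r f g z - bracketR mul G k l r f g z)"

end

theory Submission
  imports Defs
begin

no_notation fps_nth (infixl \<open>$\<close> 75)

lemma det2: "det (g::real^2^2) = g$1$1 * g$2$2 - g$1$2 * g$2$1"
  by (simp add: det_2)

lemma jfac_nz:
  assumes "det g = 1" "Im w > 0"
  shows "jfac g w \<noteq> 0"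
proof
  assume h: "jfac g w = 0"
  hence "Im (jfac g w) = 0" "Re (jfac g w) = 0" by auto
  hence "g$2$1 * Im w = 0" "g$2$1 * Re w + g$2$2 = 0" by (auto simp: jfac_def)
  with assms(2) have "g$2$1 = 0" "g$2$2 = 0" by auto
  with assms(1) show False by (simp add: det2)
qed

lemma moebius_Im:
  assumes "det g = 1" "Im w > 0"
  shows "Im (moebius g w) > 0"
proof -
  have nz: "jfac g w \<noteq> 0" using jfac_nz assms by blast
  have "Im (moebius g w) = Im w / ((Re (jfac g w))^2 + (Im (jfac g w))^2)"
    using assms(1) unfolding moebius_def jfac_def Im_divide det2
    by (simp add: algebra_simps power2_eq_square)
  moreover have "(Re (jfac g w))^2 + (Im (jfac g w))^2 > 0"
    using nz by (simp add: complex_eq_iff sum_power2_gt_zero_iff)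
  ultimately show ?thesis using assms(2) by simp
qed

lemma lin_deriv: "((\<lambda>w. of_real a * w + of_real b) has_field_derivative (of_real a :: complex)) (at w)"
proof -
  have "((\<lambda>w. of_real a * w + of_real b) has_field_derivative (of_real a * 1 + 0 :: complex)) (at w)"
    by (intro DERIV_add DERIV_cmult DERIV_ident DERIV_const)
  thus ?thesis by simp
qed

lemma moebius_deriv:
  assumes "det g = 1" "Im w > 0"
  shows "(moebius g has_field_derivative 1 / (jfac g w)^2) (at w)"
proof -
  have nz: "jfac g w \<noteq> 0" using jfac_nz assms by blast
  hence nz': "of_real (g$2$1) * w + of_real (g$2$2) \<noteq> 0" unfolding jfac_def .
  have l: "((\<lambda>w. of_real a * w + of_real b) has_field_derivative (of_real a :: complex)) (at w)" for a b :: real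
    by (rule lin_deriv)
  have X: "((\<lambda>w. (of_real (g$1$1) * w + of_real (g$1$2)) / (of_real (g$2$1) * w + of_real (g$2$2)))
     has_field_derivative
     ((of_real (g$1$1)) * jfac g w - (of_real (g$1$1) * w + of_real (g$1$2)) * of_real (g$2$1)) / (jfac g w * jfac g w)) (at w)"
    unfolding jfac_def by (rule DERIV_divide[OF l l nz'])
  have "((of_real (g$1$1)) * jfac g w - (of_real (g$1$1) * w + of_real (g$1$2)) * of_real (g$2$1))
        = (of_real (g$1$1 * g$2$2 - g$1$2 * g$2$1) :: complex)"
    unfolding jfac_def by (simp add: algebra_simps)
  also have "\<dots> = 1" using assms(1) by (simp add: det2)
  finally have e: "((of_real (g$1$1)) * jfac g w - (of_real (g$1$1) * w + of_real (g$1$2)) * of_real (g$2$1)) = (1::complex)" .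
  have "moebius g = (\<lambda>w. (of_real (g$1$1) * w + of_real (g$1$2)) / (of_real (g$2$1) * w + of_real (g$2$2)))"
    by (rule ext) (simp only: moebius_def)
  with X e show ?thesis by (simp only: power2_eq_square)
qed

lemma moebius_inj:
  assumes "det g = 1" "Im w > 0" "Im z > 0" "moebius g w = moebius g z"
  shows "w = z"
proof -
  have nz: "jfac g w \<noteq> 0" "jfac g z \<noteq> 0" using jfac_nz assms by blast+
  have "(of_real (g$1$1) * w + of_real (g$1$2)) * jfac g z = (of_real (g$1$1) * z + of_real (g$1$2)) * jfac g w"
    using assms(4) nz unfolding moebius_def jfac_def by (simp add: field_simps)
  hence e: "of_real (g$1$1 * g$2$2 - g$1$2 * g$2$1) * (w - z) = 0"
    unfolding jfac_def by (simp add: algebra_simps)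
  have o: "(of_real (g$1$1 * g$2$2 - g$1$2 * g$2$1) :: complex) = 1" using assms(1) by (simp add: det2)
  from e have "w - z = 0" by (simp only: o mult_1)
  thus ?thesis by simp
qed

lemma open_uhp: "open uhp"
  unfolding uhp_def by (rule open_halfspace_Im_gt)

lemma ev_at_nhds:
  fixes x :: complex
  assumes "eventually P (at x)"
  shows "eventually (\<lambda>y. eventually P (nhds y)) (at x)"
proof -
  from assms obtain S where S: "open S" "x \<in> S" "\<forall>y\<in>S. y \<noteq> x \<longrightarrow> P y"
    unfolding eventually_at_topological by blast
  show ?thesis unfolding eventually_at_topological
  proof (intro exI[of _ S] conjI ballI impI)
    fix y assume y: "y \<in> S" "y \<noteq> x"
    show "eventually P (nhds y)" unfolding eventually_nhds
      using S y by (intro exI[of _ "S - {x}"]) auto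
  qed (use S in auto)
qed

lemma cosparse_nhds:
  fixes A :: "complex set"
  assumes "open A" "eventually P (cosparse A)"
  shows "eventually (\<lambda>y. eventually P (nhds y)) (cosparse A)"
  using assms by (auto simp: eventually_cosparse_open_eq intro: ev_at_nhds)

lemma cosparse_moebius:
  assumes "det g = 1" "eventually P (cosparse uhp)"
  shows "eventually (\<lambda>w. P (moebius g w)) (cosparse uhp)"
proof -
  have "eventually (\<lambda>w. P (moebius g w)) (at z)" if z: "z \<in> uhp" for z
  proof -
    have zi: "Im z > 0" using z by (simp add: uhp_def)
    have mz: "moebius g z \<in> uhp" using moebius_Im[OF assms(1) zi] by (simp add: uhp_def)
    have "eventually P (at (moebius g z))"
      using assms(2) mz open_uhp by (auto simp: eventually_cosparse_open_eq)
    moreover have "filterlim (moebius g) (at (moebius g z)) (at z)"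
    proof (rule filterlim_atI)
      have "isCont (moebius g) z" using moebius_deriv[OF assms(1) zi] DERIV_isCont by blast
      thus "(moebius g \<longlongrightarrow> moebius g z) (at z)" by (simp add: isCont_def)
      have "eventually (\<lambda>w. w \<in> uhp - {z}) (at z)" using eventually_at_in_open[OF open_uhp z] .
      thus "eventually (\<lambda>w. moebius g w \<noteq> moebius g z) (at z)"
        by eventually_elim (use moebius_inj[OF assms(1) _ zi] in \<open>auto simp: uhp_def\<close>)
    qed
    ultimately show ?thesis by (rule eventually_compose_filterlim)
  qed
  thus ?thesis using open_uhp by (simp add: eventually_cosparse_open_eq)
qed

lemma MF_iff: "F \<in> MF \<Gamma> k \<longleftrightarrow> vmeromorphic_on F uhp \<and>
     (\<forall>g\<in>\<Gamma>. \<forall>\<^sub>\<approx>z\<in>uhp. (jfac g z) powi (-k) *s F (moebius g z) = F z)"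
  by (simp add: MF_def)

context
  fixes mul :: "complex^'n \<Rightarrow> complex^'n \<Rightarrow> complex^'n" and one
  assumes alg: "fd_unital_algebra mul one"
begin

lemma mul_add_l: "mul (x + y) z = mul x z + mul y z" using alg by (simp add: fd_unital_algebra_def)
lemma mul_add_r: "mul x (y + z) = mul x y + mul x z" using alg by (simp add: fd_unital_algebra_def)
lemma mul_sc_l: "mul (c *s x) y = c *s mul x y" using alg by (simp add: fd_unital_algebra_def)
lemma mul_sc_r: "mul x (c *s y) = c *s mul x y" using alg by (simp add: fd_unital_algebra_def)
lemma mul_one_l: "mul one x = x" using alg by (simp add: fd_unital_algebra_def)

lemma mul_zero_l: "mul 0 y = 0"
  using mul_add_l[of 0 0 y] by simp
lemma mul_zero_r: "mul x 0 = 0"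
  using mul_add_r[of x 0 0] by simp

lemma mul_sum_l: "mul (sum f S) y = sum (\<lambda>j. mul (f j) y) S"
  by (induction S rule: infinite_finite_induct) (auto simp: mul_zero_l mul_add_l)
lemma mul_sum_r: "mul x (sum f S) = sum (\<lambda>j. mul x (f j)) S"
  by (induction S rule: infinite_finite_induct) (auto simp: mul_zero_r mul_add_r)

lemma mul_expand:
  "mul x y $ i = (\<Sum>j\<in>UNIV. \<Sum>m\<in>UNIV. x$j * y$m * (mul (axis j 1) (axis m 1) $ i))"
proof -
  have "mul x y = mul (\<Sum>j\<in>UNIV. (x$j) *s axis j 1) (\<Sum>m\<in>UNIV. (y$m) *s axis m 1)"
    by (simp only: basis_expansion)
  also have "\<dots> = (\<Sum>j\<in>UNIV. \<Sum>m\<in>UNIV. mul ((x$j) *s axis j 1) ((y$m) *s axis m 1))"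
    by (subst mul_sum_l) (simp only: mul_sum_r)
  also have "\<dots> = (\<Sum>j\<in>UNIV. \<Sum>m\<in>UNIV. (x$j * y$m) *s mul (axis j 1) (axis m 1))"
    by (intro sum.cong refl) (simp only: mul_sc_l mul_sc_r vector_smult_assoc mult.commute)
  finally have "mul x y $ i = (\<Sum>j\<in>UNIV. \<Sum>m\<in>UNIV. (x$j * y$m) *s mul (axis j 1) (axis m 1)) $ i"
    by (rule arg_cong)
  thus ?thesis by (simp only: sum_component vector_smult_component)
qed

lemma vmero_mul:
  assumes "vmeromorphic_on F A" "vmeromorphic_on H A"
  shows "vmeromorphic_on (\<lambda>z. mul (F z) (H z)) A"
  unfolding vmeromorphic_on_def
proof
  fix i
  have e: "(\<lambda>z. mul (F z) (H z) $ i) = (\<lambda>z. \<Sum>j\<in>UNIV. \<Sum>m\<in>UNIV. F z$j * H z$m * (mul (axis j 1) (axis m 1) $ i))"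
    by (rule ext) (rule mul_expand)
  show "(\<lambda>z. mul (F z) (H z) $ i) meromorphic_on A"
    unfolding e using assms unfolding vmeromorphic_on_def by (intro meromorphic_on_sum meromorphic_on_mult meromorphic_on_const) auto
qed

lemma MF_mul:
  assumes "F \<in> MF \<Gamma> k" "H \<in> MF \<Gamma> l" "m = k + l" and dets: "\<forall>g\<in>\<Gamma>. det g = 1"
  shows "(\<lambda>z. mul (F z) (H z)) \<in> MF \<Gamma> m"
  unfolding MF_iff
proof (intro conjI ballI)
  show "vmeromorphic_on (\<lambda>z. mul (F z) (H z)) uhp"
    using assms by (intro vmero_mul) (auto simp: MF_iff)
  fix g assume g: "g \<in> \<Gamma>"
  have e1: "\<forall>\<^sub>\<approx>z\<in>uhp. (jfac g z) powi (-k) *s F (moebius g z) = F z"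
   and e2: "\<forall>\<^sub>\<approx>z\<in>uhp. (jfac g z) powi (-l) *s H (moebius g z) = H z"
    using assms g by (auto simp: MF_iff)
  have e3: "\<forall>\<^sub>\<approx>z\<in>uhp. z \<in> uhp" using open_uhp by (intro eventually_in_cosparse) auto
  show "\<forall>\<^sub>\<approx>z\<in>uhp. (jfac g z) powi (-m) *s mul (F (moebius g z)) (H (moebius g z)) = mul (F z) (H z)"
    using e1 e2 e3
  proof eventually_elim
    case (elim z)
    have "jfac g z \<noteq> 0" using jfac_nz dets g elim(3) by (auto simp: uhp_def)
    hence "(jfac g z) powi (-m) = (jfac g z) powi (-k) * (jfac g z) powi (-l)"
      using assms(3) power_int_add[of "jfac g z" "-k" "-l"] by simp
    hence "(jfac g z) powi (-m) *s mul (F (moebius g z)) (H (moebius g z))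
       = mul ((jfac g z) powi (-k) *s F (moebius g z)) ((jfac g z) powi (-l) *s H (moebius g z))"
      by (simp add: mul_sc_l mul_sc_r mult.commute)
    thus ?case using elim by simp
  qed
qed

end

lemma MF_zero: "(\<lambda>z. 0) \<in> MF \<Gamma> k"
  unfolding MF_iff vmeromorphic_on_def by auto

lemma MF_add:
  assumes "F \<in> MF \<Gamma> k" "H \<in> MF \<Gamma> k"
  shows "(\<lambda>z. F z + H z) \<in> MF \<Gamma> k"
  unfolding MF_iff
proof (intro conjI ballI)
  show "vmeromorphic_on (\<lambda>z. F z + H z) uhp"
    using assms unfolding MF_iff vmeromorphic_on_def by (auto intro!: meromorphic_on_add)
  fix g assume g: "g \<in> \<Gamma>"
  have e1: "\<forall>\<^sub>\<approx>z\<in>uhp. (jfac g z) powi (-k) *s F (moebius g z) = F z"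
   and e2: "\<forall>\<^sub>\<approx>z\<in>uhp. (jfac g z) powi (-k) *s H (moebius g z) = H z"
    using assms g by (auto simp: MF_iff)
  show "\<forall>\<^sub>\<approx>z\<in>uhp. (jfac g z) powi (-k) *s (F (moebius g z) + H (moebius g z)) = F z + H z"
    using e1 e2 by eventually_elim (simp add: vector_add_ldistrib)
qed

lemma MF_scale:
  assumes "F \<in> MF \<Gamma> k"
  shows "(\<lambda>z. c *s F z) \<in> MF \<Gamma> k"
  unfolding MF_iff
proof (intro conjI ballI)
  show "vmeromorphic_on (\<lambda>z. c *s F z) uhp"
    using assms unfolding MF_iff vmeromorphic_on_def by (auto intro!: meromorphic_on_mult)
  fix g assume g: "g \<in> \<Gamma>"
  have e1: "\<forall>\<^sub>\<approx>z\<in>uhp. (jfac g z) powi (-k) *s F (moebius g z) = F z"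
    using assms g by (auto simp: MF_iff)
  show "\<forall>\<^sub>\<approx>z\<in>uhp. (jfac g z) powi (-k) *s (c *s F (moebius g z)) = c *s F z"
    using e1 by eventually_elim (metis vector_smult_assoc mult.commute)
qed

lemma MF_diff:
  assumes "F \<in> MF \<Gamma> k" "H \<in> MF \<Gamma> k"
  shows "(\<lambda>z. F z - H z) \<in> MF \<Gamma> k"
proof -
  have "(\<lambda>z. F z + (-1) *s H z) \<in> MF \<Gamma> k" by (intro MF_add MF_scale assms)
  moreover have "(\<lambda>z. F z + (-1) *s H z) = (\<lambda>z. F z - H z)"
    by (auto simp: vec_eq_iff)
  ultimately show ?thesis by simp
qed

lemma MF_sum:
  assumes "finite I" "\<And>i. i \<in> I \<Longrightarrow> f i \<in> MF \<Gamma> k"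
  shows "(\<lambda>z. \<Sum>i\<in>I. f i z) \<in> MF \<Gamma> k"
  using assms by (induction I rule: finite_induct) (auto intro: MF_zero MF_add)

context
  fixes mul :: "complex^'n \<Rightarrow> complex^'n \<Rightarrow> complex^'n" and one
  assumes alg: "fd_unital_algebra mul one"
begin

lemma alg_id:
  fixes J P c Y D X k a2 a4 :: complex
  assumes "J \<noteq> 0" "P \<noteq> 0" "a2 \<noteq> 0" "a4 = 2 * a2"
  shows "1 / (P * J^2) * (J^2 * (k * (P / J) * c * Y + P * D) / a2 - k / a4 * ((J^2 * P) * X + (2 * c * J * P) * Y))
       = D / a2 - k / a4 * X"
proof -
  have e1: "J^2 * (k * (P / J) * c * Y + P * D) = P * J * (k * c * Y + J * D)"
    using assms by (simp add: power2_eq_square field_simps)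
  have e2: "(J^2 * P) * X + (2 * c * J * P) * Y = P * J * (J * X + 2 * c * Y)"
    by (simp add: power2_eq_square algebra_simps)
  have "1 / (P * J^2) * (J^2 * (k * (P / J) * c * Y + P * D) / a2 - k / a4 * ((J^2 * P) * X + (2 * c * J * P) * Y))
      = 1 / (P * J^2) * (P * J * (k * c * Y + J * D) / a2 - k / a4 * (P * J * (J * X + 2 * c * Y)))"
    by (simp only: e1 e2)
  also have "\<dots> = (k * c * Y + J * D) / (J * a2) - k / a4 * (J * X + 2 * c * Y) / J"
    using assms by (simp add: power2_eq_square field_simps)
  also have "\<dots> = D / a2 - k / a4 * X"
    using assms by (simp add: field_simps)
  finally show ?thesis .
qed

lemma DG_point:
  fixes F G :: "complex \<Rightarrow> complex^'n" and \<gamma> :: "real^2^2"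
  assumes det: "det \<gamma> = 1" and wi: "Im w > 0"
    and ev: "eventually (\<lambda>u. jfac \<gamma> u powi (-k) *s F (moebius \<gamma> u) = F u) (nhds w)"
    and Gw: "G (moebius \<gamma> w) = (jfac \<gamma> w)^2 *s G w + (2 * of_real (\<gamma>$2$1) * jfac \<gamma> w) *s one"
    and an1: "\<forall>i. (\<lambda>u. F u $ i) analytic_on {w}"
    and an2: "\<forall>i. (\<lambda>u. F u $ i) analytic_on {moebius \<gamma> w}"
  shows "jfac \<gamma> w powi (-(k+2)) *s DG mul G k F (moebius \<gamma> w) = DG mul G k F w"
proof -
  define J where "J = jfac \<gamma> w"
  define c where "c = (of_real (\<gamma>$2$1) :: complex)"
  define P where "P = J powi k"
  have nz: "J \<noteq> 0" unfolding J_def using jfac_nz[OF det wi] .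
  have Pnz: "P \<noteq> 0" unfolding P_def using nz by simp
  have ev2: "eventually (\<lambda>u. u \<in> uhp) (nhds w)"
    using open_uhp wi by (intro eventually_nhds_in_open) (auto simp: uhp_def)
  have ev3: "eventually (\<lambda>u. F (moebius \<gamma> u) = jfac \<gamma> u powi k *s F u) (nhds w)"
    using ev ev2
  proof eventually_elim
    case (elim u)
    have "jfac \<gamma> u \<noteq> 0" using jfac_nz[OF det] elim(2) by (simp add: uhp_def)
    hence "jfac \<gamma> u powi k * jfac \<gamma> u powi (-k) = 1" by (simp add: power_int_minus)
    hence "F (moebius \<gamma> u) = jfac \<gamma> u powi k *s (jfac \<gamma> u powi (-k) *s F (moebius \<gamma> u))"
      by simp
    thus ?case using elim(1) by simp
  qed
  have Fw: "F (moebius \<gamma> w) = P *s F w"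
    using eventually_nhds_x_imp_x[OF ev3] unfolding P_def J_def .
  have jder: "(jfac \<gamma> has_field_derivative c) (at u)" for u
    unfolding jfac_def c_def by (rule lin_deriv)
  have Dd: "deriv (\<lambda>u. F u $ i) (moebius \<gamma> w) = J^2 * (of_int k * (P / J) * c * F w $ i + P * deriv (\<lambda>u. F u $ i) w)" for i
  proof -
    have d0: "((\<lambda>u. F u $ i) has_field_derivative deriv (\<lambda>u. F u $ i) (moebius \<gamma> w)) (at (moebius \<gamma> w))"
      using an2 analytic_on_imp_differentiable_at DERIV_deriv_iff_field_differentiable by blast
    have d1: "((\<lambda>u. F (moebius \<gamma> u) $ i) has_field_derivative deriv (\<lambda>u. F u $ i) (moebius \<gamma> w) * (1 / J^2)) (at w)"
      unfolding J_def by (rule DERIV_chain2[OF d0 moebius_deriv[OF det wi]])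
    have d0': "((\<lambda>u. F u $ i) has_field_derivative deriv (\<lambda>u. F u $ i) w) (at w)"
      using an1 analytic_on_imp_differentiable_at DERIV_deriv_iff_field_differentiable by blast
    have d2: "((\<lambda>u. jfac \<gamma> u powi k * F u $ i) has_field_derivative
        (of_int k * J powi (k - 1) * c) * F w $ i + J powi k * deriv (\<lambda>u. F u $ i) w) (at w)"
    proof (rule DERIV_cong)
      have nz': "k \<ge> 0 \<or> jfac \<gamma> w \<noteq> 0" using nz unfolding J_def by blast
      show "((\<lambda>u. jfac \<gamma> u powi k * F u $ i) has_field_derivative
        (of_int k * jfac \<gamma> w powi (k - 1) * c) * F w $ i + deriv (\<lambda>u. F u $ i) w * jfac \<gamma> w powi k) (at w)"
        by (rule DERIV_mult[OF DERIV_power_int[OF jder[of w] nz'] d0'])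
    qed (simp add: J_def mult.commute)
    have "deriv (\<lambda>u. F (moebius \<gamma> u) $ i) w = deriv (\<lambda>u. jfac \<gamma> u powi k * F u $ i) w"
      by (rule deriv_cong_ev) (use ev3 in \<open>auto elim!: eventually_mono\<close>)
    hence "deriv (\<lambda>u. F u $ i) (moebius \<gamma> w) * (1 / J^2) = (of_int k * J powi (k - 1) * c) * F w $ i + J powi k * deriv (\<lambda>u. F u $ i) w"
      using DERIV_imp_deriv[OF d1] DERIV_imp_deriv[OF d2] by simp
    moreover have "J powi (k - 1) = P / J" unfolding P_def using nz by (simp add: power_int_diff)
    ultimately show ?thesis using nz unfolding P_def by (simp add: field_simps)
  qed
  have M: "mul (G (moebius \<gamma> w)) (F (moebius \<gamma> w)) = (J^2 * P) *s mul (G w) (F w) + (2 * c * J * P) *s F w"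
    unfolding Gw Fw J_def[symmetric] c_def[symmetric]
    by (simp add: mul_add_l[OF alg] mul_sc_l[OF alg] mul_sc_r[OF alg] mul_one_l[OF alg] ac_simps)
  have Q: "J powi (-(k+2)) = 1 / (P * J^2)"
  proof -
    have e: "J powi (k+2) = P * J^2" unfolding P_def using power_int_add[of J k 2] nz by simp
    have "J powi (-(k+2)) = inverse (J powi (k+2))" by (rule power_int_minus)
    also have "\<dots> = 1 / (P * J^2)" unfolding e by (simp add: inverse_eq_divide)
    finally show ?thesis .
  qed
  show ?thesis
  proof (subst vec_eq_iff, intro allI)
    fix i
    have "(J powi (-(k+2)) *s DG mul G k F (moebius \<gamma> w)) $ i
       = 1 / (P * J^2) * (deriv (\<lambda>u. F u $ i) (moebius \<gamma> w) / (2 * of_real pi * \<i>)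
           - of_int k / (4 * of_real pi * \<i>) * mul (G (moebius \<gamma> w)) (F (moebius \<gamma> w)) $ i)"
      unfolding Q DG_def Dop_def by (simp only: vector_smult_component vector_minus_component vec_lambda_beta)
    also have "\<dots> = 1 / (P * J^2) * (J^2 * (of_int k * (P / J) * c * F w $ i + P * deriv (\<lambda>u. F u $ i) w) / (2 * of_real pi * \<i>)
           - of_int k / (4 * of_real pi * \<i>) * ((J^2 * P) * mul (G w) (F w) $ i + (2 * c * J * P) * F w $ i))"
      unfolding Dd M by (simp only: vector_smult_component vector_add_component)
    also have "\<dots> = deriv (\<lambda>u. F u $ i) w / (2 * of_real pi * \<i>) - of_int k / (4 * of_real pi * \<i>) * mul (G w) (F w) $ i"
      by (rule alg_id) (use nz Pnz in auto)
    also have "\<dots> = DG mul G k F w $ i"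
      unfolding DG_def Dop_def by (simp only: vector_smult_component vector_minus_component vec_lambda_beta)
    finally show "(jfac \<gamma> w powi (-(k+2)) *s DG mul G k F (moebius \<gamma> w)) $ i = DG mul G k F w $ i"
      unfolding J_def .
  qed
qed

lemma DG_MF:
  fixes F G :: "complex \<Rightarrow> complex^'n"
  assumes dets: "\<forall>g\<in>\<Gamma>. det g = 1" and Gm: "vmeromorphic_on G uhp"
    and Gt: "\<forall>\<gamma>\<in>\<Gamma>. \<forall>\<^sub>\<approx>z\<in>uhp. G (moebius \<gamma> z) =
            (jfac \<gamma> z)^2 *s G z + (2 * of_real (\<gamma>$2$1) * jfac \<gamma> z) *s one"
    and F: "F \<in> MF \<Gamma> k"
  shows "DG mul G k F \<in> MF \<Gamma> (k + 2)"
  unfolding MF_iff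
proof (intro conjI ballI)
  have Fm: "vmeromorphic_on F uhp" using F by (simp add: MF_iff)
  show "vmeromorphic_on (DG mul G k F) uhp"
    unfolding vmeromorphic_on_def
  proof
    fix i
    have e: "(\<lambda>z. DG mul G k F z $ i) = (\<lambda>z. deriv (\<lambda>w. F w $ i) z / (2 * of_real pi * \<i>)
               - of_int k / (4 * of_real pi * \<i>) * mul (G z) (F z) $ i)"
      by (rule ext) (simp only: DG_def Dop_def vector_smult_component vector_minus_component vec_lambda_beta)
    have m1: "(\<lambda>w. F w $ i) meromorphic_on uhp" using Fm by (simp add: vmeromorphic_on_def)
    have m2: "(\<lambda>z. mul (G z) (F z) $ i) meromorphic_on uhp"
      using vmero_mul[OF alg Gm Fm] by (simp add: vmeromorphic_on_def)
    show "(\<lambda>z. DG mul G k F z $ i) meromorphic_on uhp"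
      unfolding e by (rule meromorphic_on_diff[OF meromorphic_on_divide[OF meromorphic_on_deriv[OF m1]
          meromorphic_on_const] meromorphic_on_mult[OF meromorphic_on_const m2]])
  qed
  fix \<gamma> assume \<gamma>: "\<gamma> \<in> \<Gamma>"
  have det: "det \<gamma> = 1" using dets \<gamma> by blast
  have E1: "\<forall>\<^sub>\<approx>w\<in>uhp. eventually (\<lambda>u. jfac \<gamma> u powi (-k) *s F (moebius \<gamma> u) = F u) (nhds w)"
    using F \<gamma> open_uhp by (intro cosparse_nhds) (auto simp: MF_iff)
  have E2: "\<forall>\<^sub>\<approx>z\<in>uhp. G (moebius \<gamma> z) =
            (jfac \<gamma> z)^2 *s G z + (2 * of_real (\<gamma>$2$1) * jfac \<gamma> z) *s one"
    using Gt \<gamma> by blast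
  have E3: "\<forall>\<^sub>\<approx>w\<in>uhp. \<forall>i. (\<lambda>u. F u $ i) analytic_on {w}"
  proof (rule eventually_all_finite)
    fix i
    show "\<forall>\<^sub>\<approx>w\<in>uhp. (\<lambda>u. F u $ i) analytic_on {w}"
      by (rule meromorphic_on_imp_analytic_cosparse) (use Fm in \<open>simp add: vmeromorphic_on_def\<close>)
  qed
  have E4: "\<forall>\<^sub>\<approx>w\<in>uhp. \<forall>i. (\<lambda>u. F u $ i) analytic_on {moebius \<gamma> w}"
    by (rule cosparse_moebius[OF det E3])
  have E5: "\<forall>\<^sub>\<approx>w\<in>uhp. w \<in> uhp" using open_uhp by (intro eventually_in_cosparse) auto
  show "\<forall>\<^sub>\<approx>z\<in>uhp. jfac \<gamma> z powi (-(k+2)) *s DG mul G k F (moebius \<gamma> z) = DG mul G k F z"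
    using E1 E2 E3 E4 E5
  proof eventually_elim
    case (elim w)
    show ?case by (rule DG_point[OF det]) (use elim in \<open>auto simp: uhp_def\<close>)
  qed
qed

lemma DGit_MF:
  fixes F G :: "complex \<Rightarrow> complex^'n"
  assumes dets: "\<forall>g\<in>\<Gamma>. det g = 1" and Gm: "vmeromorphic_on G uhp"
    and Gt: "\<forall>\<gamma>\<in>\<Gamma>. \<forall>\<^sub>\<approx>z\<in>uhp. G (moebius \<gamma> z) =
            (jfac \<gamma> z)^2 *s G z + (2 * of_real (\<gamma>$2$1) * jfac \<gamma> z) *s one"
    and F: "F \<in> MF \<Gamma> k"
  shows "DGit mul G k r F \<in> MF \<Gamma> (k + 2 * int r)"
proof (induction r)
  case 0
  show ?case using F by simp
next
  case (Suc r)
  have "DG mul G (k + 2 * int r) (DGit mul G k r F) \<in> MF \<Gamma> (k + 2 * int r + 2)"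
    by (rule DG_MF[OF dets Gm Gt Suc.IH])
  moreover have "k + 2 * int r + 2 = k + 2 * int (Suc r)" by simp
  ultimately show ?case by simp
qed

end

theorem mainTheorem14:
  fixes \<Gamma> :: "(real^2^2) set"
    and mul :: "complex^'n \<Rightarrow> complex^'n \<Rightarrow> complex^'n"
    and one :: "complex^'n"
    and G f g :: "complex \<Rightarrow> complex^'n"
    and k l :: int and r :: nat
  assumes "fuchsian \<Gamma>"
    and "fd_unital_algebra mul one"
    and "vmeromorphic_on G uhp"
    and "\<forall>\<gamma>\<in>\<Gamma>. \<forall>\<^sub>\<approx>z\<in>uhp. G (moebius \<gamma> z) =
            (jfac \<gamma> z)^2 *s G z + (2 * of_real (\<gamma>$2$1) * jfac \<gamma> z) *s one"
    and "f \<in> MF \<Gamma> k"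
    and "g \<in> MF \<Gamma> l"
  shows "bracketL mul G k l r f g \<in> MF \<Gamma> (k + l + 2 * int r) \<and>
         bracketR mul G k l r f g \<in> MF \<Gamma> (k + l + 2 * int r) \<and>
         bracketSym mul G k l r f g \<in> MF \<Gamma> (k + l + 2 * int r) \<and>
         bracketSkew mul G k l r f g \<in> MF \<Gamma> (k + l + 2 * int r)"
proof -
  note alg = assms(2)
  have dets: "\<forall>g\<in>\<Gamma>. det g = 1" using assms(1) by (auto simp: fuchsian_def SL2R_def)
  have Dk: "DGit mul G k s f \<in> MF \<Gamma> (k + 2 * int s)" for s
    by (rule DGit_MF[OF alg dets assms(3) assms(4) assms(5)])
  have Dl: "DGit mul G l s g \<in> MF \<Gamma> (l + 2 * int s)" for s
    by (rule DGit_MF[OF alg dets assms(3) assms(4) assms(6)])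
  have wt: "k + l + 2 * int r = (k + 2 * int s) + (l + 2 * int (r - s))"
       "k + l + 2 * int r = (l + 2 * int (r - s)) + (k + 2 * int s)" if "s \<in> {..r}" for s
    using that by (auto simp: of_nat_diff)
  have L: "bracketL mul G k l r f g \<in> MF \<Gamma> (k + l + 2 * int r)"
  proof -
    have e: "bracketL mul G k l r f g = (\<lambda>z. \<Sum>s\<le>r. ((-1) ^ s * (of_int (k + int r - 1) gchoose (r - s))
                         * (of_int (l + int r - 1) gchoose s))
             *s mul (DGit mul G k s f z) (DGit mul G l (r - s) g z))"
      by (rule ext) (simp only: bracketL_def)
    show ?thesis unfolding e
      by (intro MF_sum MF_scale MF_mul[OF alg Dk Dl _ dets] finite_atMost) (rule wt(1))
  qed
  have R: "bracketR mul G k l r f g \<in> MF \<Gamma> (k + l + 2 * int r)"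
  proof -
    have e: "bracketR mul G k l r f g = (\<lambda>z. \<Sum>s\<le>r. ((-1) ^ s * (of_int (k + int r - 1) gchoose (r - s))
                         * (of_int (l + int r - 1) gchoose s))
             *s mul (DGit mul G l (r - s) g z) (DGit mul G k s f z))"
      by (rule ext) (simp only: bracketR_def)
    show ?thesis unfolding e
      by (intro MF_sum MF_scale MF_mul[OF alg Dl Dk _ dets] finite_atMost) (rule wt(2))
  qed
  have S: "bracketSym mul G k l r f g \<in> MF \<Gamma> (k + l + 2 * int r)"
  proof -
    have e: "bracketSym mul G k l r f g = (\<lambda>z. (1/2 :: complex) *s (bracketL mul G k l r f g z + bracketR mul G k l r f g z))"
      by (rule ext) (simp only: bracketSym_def)
    show ?thesis unfolding e by (intro MF_scale MF_add L R)
  qed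
  have K: "bracketSkew mul G k l r f g \<in> MF \<Gamma> (k + l + 2 * int r)"
  proof -
    have e: "bracketSkew mul G k l r f g = (\<lambda>z. (1/2 :: complex) *s (bracketL mul G k l r f g z - bracketR mul G k l r f g z))"
      by (rule ext) (simp only: bracketSkew_def)
    show ?thesis unfolding e by (intro MF_scale MF_diff L R)
  qed
  show ?thesis using L R S K by blast
qed

end
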